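(* Let $R$ be an absolutely integrally closed ring, $D$ an integral domain, and $\varphi: R\to D$ an integral ring homomorphism. Then $\varphi$ is surjective and $D$ is an absolutely integrally closed domain.
   Context: All rings are commutative with $1$ and ring maps preserve $1$. An integral domain $A$ is absolutely integrally closed if $A$ is integrally closed in its field of fractions $K$ and $K$ is algebraically closed. A ring $R$ is absolutely integrally closed if $R\cong A_1\times\cdots\times A_n$ for finitely many absolutely integrally closed domains $A_1,\dots,A_n$. A ring map $\varphi: R\to D$ is integral if every element of $D$ is integral over $\varphi(R)$. *)

theory Defs
  imports "HOL-Algebra.Algebraic_Closure" "HOL-Algebra.Chinese_Remainder"
begin

text \<open>x is integral over the subset S of the ring R: x is a root of a monic
  polynomial (leading coefficient one)
  with coefficients in S.  Polynomials are coefficient lists, highest first.\<close>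
definition integral_over :: "('a, 'm) ring_scheme \<Rightarrow> 'a set \<Rightarrow> 'a \<Rightarrow> bool" where
  "integral_over R S x \<longleftrightarrow>
     (\<exists>p. polynomial\<^bsub>R\<^esub> S p \<and> p \<noteq> [] \<and> lead_coeff p = \<one>\<^bsub>R\<^esub> \<and> ring.eval R p x = \<zero>\<^bsub>R\<^esub>)"

definition integral_hom :: "('a, 'm) ring_scheme \<Rightarrow> ('b, 'n) ring_scheme \<Rightarrow> ('a \<Rightarrow> 'b) \<Rightarrow> bool" where
  "integral_hom R D \<phi> \<longleftrightarrow> (\<forall>d \<in> carrier D. integral_over D (\<phi> ` carrier R) d)"

definition is_fraction_field :: "('a, 'm) ring_scheme \<Rightarrow> ('b, 'n) ring_scheme \<Rightarrow> ('a \<Rightarrow> 'b) \<Rightarrow> bool" where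
  "is_fraction_field A K \<iota> \<longleftrightarrow>
     domain A \<and> field K \<and> \<iota> \<in> ring_hom A K \<and> inj_on \<iota> (carrier A) \<and>
     (\<forall>k \<in> carrier K. \<exists>a \<in> carrier A. \<exists>b \<in> carrier A. b \<noteq> \<zero>\<^bsub>A\<^esub> \<and>
        k = \<iota> a \<otimes>\<^bsub>K\<^esub> inv\<^bsub>K\<^esub> (\<iota> b))"

text \<open>The field of fractions is unique up to isomorphism;
  a copy always exists with carrier of type ('a * 'a) set (classes of pairs).\<close>
definition aic_domain :: "('a, 'm) ring_scheme \<Rightarrow> bool" where
  "aic_domain A \<longleftrightarrow> domain A \<and>
     (\<exists>(K :: ('a \<times> 'a) set ring) \<iota>. is_fraction_field A K \<iota> \<and>
        (\<forall>k \<in> carrier K. integral_over K (\<iota> ` carrier A) k \<longrightarrow> k \<in> \<iota> ` carrier A) \<and>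
        algebraically_closed K)"

text \<open>Each factor is isomorphic to a quotient of R, hence
  can be taken with carrier of type 'a set set.\<close>
definition aic_ring :: "('a, 'm) ring_scheme \<Rightarrow> bool" where
  "aic_ring R \<longleftrightarrow>
     (\<exists>As :: ('a set) ring list. (\<forall>A \<in> set As. aic_domain A) \<and> R \<simeq> RDirProd_list As)"

end

theory Submission
  imports Defs
begin


definition frac :: "('b,'m) ring_scheme \<Rightarrow> 'b \<Rightarrow> 'b \<Rightarrow> ('b \<times> 'b) set" where
  "frac D a b = {(c,d). c \<in> carrier D \<and> d \<in> carrier D \<and> d \<noteq> \<zero>\<^bsub>D\<^esub> \<and> a \<otimes>\<^bsub>D\<^esub> d = c \<otimes>\<^bsub>D\<^esub> b}"

definition fcarr :: "('b,'m) ring_scheme \<Rightarrow> ('b \<times> 'b) set set" where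
  "fcarr D = {frac D a b | a b. a \<in> carrier D \<and> b \<in> carrier D \<and> b \<noteq> \<zero>\<^bsub>D\<^esub>}"

definition frep :: "('b \<times> 'b) set \<Rightarrow> 'b \<times> 'b" where
  "frep U = (SOME p. p \<in> U)"

definition fmult :: "('b,'m) ring_scheme \<Rightarrow> ('b \<times> 'b) set \<Rightarrow> ('b \<times> 'b) set \<Rightarrow> ('b \<times> 'b) set" where
  "fmult D U V = frac D (fst (frep U) \<otimes>\<^bsub>D\<^esub> fst (frep V)) (snd (frep U) \<otimes>\<^bsub>D\<^esub> snd (frep V))"

definition fadd :: "('b,'m) ring_scheme \<Rightarrow> ('b \<times> 'b) set \<Rightarrow> ('b \<times> 'b) set \<Rightarrow> ('b \<times> 'b) set" where
  "fadd D U V = frac D (fst (frep U) \<otimes>\<^bsub>D\<^esub> snd (frep V) \<oplus>\<^bsub>D\<^esub> fst (frep V) \<otimes>\<^bsub>D\<^esub> snd (frep U))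
                       (snd (frep U) \<otimes>\<^bsub>D\<^esub> snd (frep V))"

definition FF :: "('b,'m) ring_scheme \<Rightarrow> ('b \<times> 'b) set ring" where
  "FF D = \<lparr>carrier = fcarr D, monoid.mult = fmult D, one = frac D \<one>\<^bsub>D\<^esub> \<one>\<^bsub>D\<^esub>,
           zero = frac D \<zero>\<^bsub>D\<^esub> \<one>\<^bsub>D\<^esub>, add = fadd D\<rparr>"

lemma FF_simps [simp]: "carrier (FF D) = fcarr D" "monoid.mult (FF D) = fmult D"
  "one (FF D) = frac D \<one>\<^bsub>D\<^esub> \<one>\<^bsub>D\<^esub>" "zero (FF D) = frac D \<zero>\<^bsub>D\<^esub> \<one>\<^bsub>D\<^esub>" "add (FF D) = fadd D"
  by (simp_all add: FF_def)

context domain begin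

lemma frac_self: "a \<in> carrier R \<Longrightarrow> b \<in> carrier R \<Longrightarrow> b \<noteq> \<zero> \<Longrightarrow> (a, b) \<in> frac R a b"
  unfolding frac_def by auto

lemma frac_eq:
  assumes "a \<in> carrier R" "b \<in> carrier R" "c \<in> carrier R" "d \<in> carrier R" "b \<noteq> \<zero>" "d \<noteq> \<zero>"
  shows "frac R a b = frac R c d \<longleftrightarrow> a \<otimes> d = c \<otimes> b"
proof
  assume "frac R a b = frac R c d"
  then have "(a, b) \<in> frac R c d" using frac_self assms by blast
  then show "a \<otimes> d = c \<otimes> b" unfolding frac_def using assms by (auto simp: m_comm)
next
  assume H: "a \<otimes> d = c \<otimes> b"
  have *: "frac R a b \<subseteq> frac R c d" if H: "a \<otimes> d = c \<otimes> b"
    and "a \<in> carrier R" "b \<in> carrier R" "c \<in> carrier R" "d \<in> carrier R" "b \<noteq> \<zero>" "d \<noteq> \<zero>" for a b c d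
  proof
    fix p assume "p \<in> frac R a b"
    then obtain e f where p: "p = (e, f)" "e \<in> carrier R" "f \<in> carrier R" "f \<noteq> \<zero>" "a \<otimes> f = e \<otimes> b"
      unfolding frac_def by auto
    have "(c \<otimes> f) \<otimes> b = (e \<otimes> d) \<otimes> b"
    proof -
      have "(c \<otimes> f) \<otimes> b = f \<otimes> (c \<otimes> b)" using that(2-5) p(2,3) by algebra
      also have "\<dots> = f \<otimes> (a \<otimes> d)" using H by simp
      also have "\<dots> = d \<otimes> (a \<otimes> f)" using that(2-5) p(2,3) by algebra
      also have "\<dots> = d \<otimes> (e \<otimes> b)" using p(5) by simp
      also have "\<dots> = (e \<otimes> d) \<otimes> b" using that(2-5) p(2,3) by algebra
      finally show ?thesis .
    qed
    then have "c \<otimes> f = e \<otimes> d" using that p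
      by (metis m_closed m_comm m_lcancel)
    then show "p \<in> frac R c d" unfolding frac_def using p that by auto
  qed
  show "frac R a b = frac R c d"
    using *[OF H assms] *[of c b a d] H assms by (auto simp: m_comm)
qed

lemma frac_eqI:
  "a \<otimes> d = c \<otimes> b \<Longrightarrow> a \<in> carrier R \<Longrightarrow> b \<in> carrier R \<Longrightarrow> c \<in> carrier R \<Longrightarrow> d \<in> carrier R
   \<Longrightarrow> b \<noteq> \<zero> \<Longrightarrow> d \<noteq> \<zero> \<Longrightarrow> frac R a b = frac R c d"
  using frac_eq by blast

lemma frep_frac:
  assumes "a \<in> carrier R" "b \<in> carrier R" "b \<noteq> \<zero>"
  obtains c d where "frep (frac R a b) = (c, d)" "c \<in> carrier R" "d \<in> carrier R" "d \<noteq> \<zero>"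
    "a \<otimes> d = c \<otimes> b"
proof -
  have "frep (frac R a b) \<in> frac R a b" unfolding frep_def
    using frac_self[OF assms] by (rule someI)
  then show ?thesis using that unfolding frac_def by auto
qed

lemma fmult_frac:
  assumes "a \<in> carrier R" "b \<in> carrier R" "c \<in> carrier R" "d \<in> carrier R" "b \<noteq> \<zero>" "d \<noteq> \<zero>"
  shows "fmult R (frac R a b) (frac R c d) = frac R (a \<otimes> c) (b \<otimes> d)"
proof -
  obtain a' b' where 1: "frep (frac R a b) = (a', b')" "a' \<in> carrier R" "b' \<in> carrier R" "b' \<noteq> \<zero>"
    "a \<otimes> b' = a' \<otimes> b" using frep_frac assms by metis
  obtain c' d' where 2: "frep (frac R c d) = (c', d')" "c' \<in> carrier R" "d' \<in> carrier R" "d' \<noteq> \<zero>"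
    "c \<otimes> d' = c' \<otimes> d" using frep_frac assms by metis
  have "(a' \<otimes> c') \<otimes> (b \<otimes> d) = (a \<otimes> c) \<otimes> (b' \<otimes> d')"
  proof -
    have "(a' \<otimes> c') \<otimes> (b \<otimes> d) = (a' \<otimes> b) \<otimes> (c' \<otimes> d)" using 1(2,3) 2(2,3) assms(1-4) by algebra
    also have "\<dots> = (a \<otimes> b') \<otimes> (c \<otimes> d')" by (simp only: 1(5) 2(5))
    also have "\<dots> = (a \<otimes> c) \<otimes> (b' \<otimes> d')" using 1(2,3) 2(2,3) assms(1-4) by algebra
    finally show ?thesis .
  qed
  then show ?thesis unfolding fmult_def 1 2 fst_conv snd_conv
    by (rule frac_eqI) (use assms 1 2 in \<open>auto simp: integral_iff\<close>)
qed

lemma fadd_frac: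
  assumes "a \<in> carrier R" "b \<in> carrier R" "c \<in> carrier R" "d \<in> carrier R" "b \<noteq> \<zero>" "d \<noteq> \<zero>"
  shows "fadd R (frac R a b) (frac R c d) = frac R (a \<otimes> d \<oplus> c \<otimes> b) (b \<otimes> d)"
proof -
  obtain a' b' where 1: "frep (frac R a b) = (a', b')" "a' \<in> carrier R" "b' \<in> carrier R" "b' \<noteq> \<zero>"
    "a \<otimes> b' = a' \<otimes> b" using frep_frac assms by metis
  obtain c' d' where 2: "frep (frac R c d) = (c', d')" "c' \<in> carrier R" "d' \<in> carrier R" "d' \<noteq> \<zero>"
    "c \<otimes> d' = c' \<otimes> d" using frep_frac assms by metis
  have "(a' \<otimes> d' \<oplus> c' \<otimes> b') \<otimes> (b \<otimes> d) = (a \<otimes> d \<oplus> c \<otimes> b) \<otimes> (b' \<otimes> d')"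
  proof -
    have "(a' \<otimes> d' \<oplus> c' \<otimes> b') \<otimes> (b \<otimes> d) = (a' \<otimes> b) \<otimes> (d' \<otimes> d) \<oplus> (c' \<otimes> d) \<otimes> (b' \<otimes> b)"
      using 1(2,3) 2(2,3) assms(1-4) by algebra
    also have "\<dots> = (a \<otimes> b') \<otimes> (d' \<otimes> d) \<oplus> (c \<otimes> d') \<otimes> (b' \<otimes> b)" by (simp only: 1(5) 2(5))
    also have "\<dots> = (a \<otimes> d \<oplus> c \<otimes> b) \<otimes> (b' \<otimes> d')" using 1(2,3) 2(2,3) assms(1-4) by algebra
    finally show ?thesis .
  qed
  then show ?thesis unfolding fadd_def 1 2 fst_conv snd_conv
    by (rule frac_eqI) (use assms 1 2 in \<open>auto simp: integral_iff\<close>)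
qed

lemma fcarrE:
  assumes "U \<in> fcarr R"
  obtains a b where "a \<in> carrier R" "b \<in> carrier R" "b \<noteq> \<zero>" "U = frac R a b"
  using assms unfolding fcarr_def by auto

lemma frac_in_fcarr: "a \<in> carrier R \<Longrightarrow> b \<in> carrier R \<Longrightarrow> b \<noteq> \<zero> \<Longrightarrow> frac R a b \<in> fcarr R"
  unfolding fcarr_def by auto


lemma FF_cring: "cring (FF R)"
proof (rule cringI)
  show "abelian_group (FF R)"
  proof (rule abelian_groupI, simp_all)
    fix x y assume "x \<in> fcarr R" "y \<in> fcarr R" then show "fadd R x y \<in> fcarr R"
      by (elim fcarrE) (simp add: fadd_frac frac_in_fcarr integral_iff)
  next
    show "frac R \<zero> \<one> \<in> fcarr R" by (simp add: frac_in_fcarr)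
  next
    fix x y z assume "x \<in> fcarr R" "y \<in> fcarr R" "z \<in> fcarr R"
    then show "fadd R (fadd R x y) z = fadd R x (fadd R y z)"
      by (elim fcarrE) (simp add: fadd_frac integral_iff, rule frac_eqI, algebra, simp_all add: integral_iff)
  next
    fix x y assume "x \<in> fcarr R" "y \<in> fcarr R"
    then show "fadd R x y = fadd R y x"
      by (elim fcarrE) (simp add: fadd_frac integral_iff, rule frac_eqI, algebra, simp_all add: integral_iff)
  next
    fix x assume "x \<in> fcarr R"
    then show "fadd R (frac R \<zero> \<one>) x = x"
      by (elim fcarrE) (simp add: fadd_frac integral_iff)
  next
    fix x assume "x \<in> fcarr R"
    then show "\<exists>y\<in>fcarr R. fadd R y x = frac R \<zero> \<one>"
    proof (elim fcarrE)
      fix a b assume ab: "a \<in> carrier R" "b \<in> carrier R" "b \<noteq> \<zero>" "x = frac R a b"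
      have "fadd R (frac R (\<ominus> a) b) x = frac R ((\<ominus> a) \<otimes> b \<oplus> a \<otimes> b) (b \<otimes> b)"
        using ab by (simp add: fadd_frac)
      also have "\<dots> = frac R \<zero> \<one>"
        by (rule frac_eqI) (use ab in \<open>algebra\<close>, use ab in \<open>simp_all add: integral_iff\<close>)
      finally have "fadd R (frac R (\<ominus> a) b) x = frac R \<zero> \<one>" .
      then show ?thesis using ab frac_in_fcarr[of "\<ominus> a" b] by auto
    qed
  qed
next
  show "comm_monoid (FF R)"
  proof (rule comm_monoidI, simp_all)
    fix x y assume "x \<in> fcarr R" "y \<in> fcarr R" then show "fmult R x y \<in> fcarr R"
      by (elim fcarrE) (simp add: fmult_frac frac_in_fcarr integral_iff)
  next
    show "frac R \<one> \<one> \<in> fcarr R" by (simp add: frac_in_fcarr)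
  next
    fix x y z assume "x \<in> fcarr R" "y \<in> fcarr R" "z \<in> fcarr R"
    then show "fmult R (fmult R x y) z = fmult R x (fmult R y z)"
      by (elim fcarrE) (simp add: fmult_frac integral_iff, rule frac_eqI, algebra, simp_all add: integral_iff)
  next
    fix x y assume "x \<in> fcarr R" "y \<in> fcarr R"
    then show "fmult R x y = fmult R y x"
      by (elim fcarrE) (simp add: fmult_frac integral_iff, rule frac_eqI, algebra, simp_all add: integral_iff)
  next
    fix x assume "x \<in> fcarr R"
    then show "fmult R (frac R \<one> \<one>) x = x"
      by (elim fcarrE) (simp add: fmult_frac integral_iff)
  qed
next
  fix x y z assume "x \<in> carrier (FF R)" "y \<in> carrier (FF R)" "z \<in> carrier (FF R)"
  then show "(x \<oplus>\<^bsub>FF R\<^esub> y) \<otimes>\<^bsub>FF R\<^esub> z = x \<otimes>\<^bsub>FF R\<^esub> z \<oplus>\<^bsub>FF R\<^esub> y \<otimes>\<^bsub>FF R\<^esub> z"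
    by (simp, elim fcarrE) (simp add: fmult_frac fadd_frac integral_iff, rule frac_eqI, algebra, simp_all add: integral_iff)
qed

lemma FF_zero_iff: "a \<in> carrier R \<Longrightarrow> b \<in> carrier R \<Longrightarrow> b \<noteq> \<zero> \<Longrightarrow> frac R a b = frac R \<zero> \<one> \<longleftrightarrow> a = \<zero>"
  by (simp add: frac_eq)

lemma FF_field: "field (FF R)"
proof (rule cring.cring_fieldI2[OF FF_cring])
  show "\<zero>\<^bsub>FF R\<^esub> \<noteq> \<one>\<^bsub>FF R\<^esub>" using FF_zero_iff[of \<one> \<one>] by auto
next
  fix x assume "x \<in> carrier (FF R)" "x \<noteq> \<zero>\<^bsub>FF R\<^esub>"
  then obtain a b where ab: "a \<in> carrier R" "b \<in> carrier R" "b \<noteq> \<zero>" "x = frac R a b"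
    using fcarrE by (metis FF_simps(1))
  with \<open>x \<noteq> \<zero>\<^bsub>FF R\<^esub>\<close> have "a \<noteq> \<zero>" using FF_zero_iff by auto
  note ab = ab this
  have "fmult R x (frac R b a) = frac R (a \<otimes> b) (b \<otimes> a)"
    using ab by (simp add: fmult_frac)
  also have "\<dots> = frac R \<one> \<one>"
    by (rule frac_eqI) (use ab in \<open>algebra\<close>, use ab in \<open>simp_all add: integral_iff\<close>)
  finally have "fmult R x (frac R b a) = frac R \<one> \<one>" .
  then show "\<exists>y\<in>carrier (FF R). x \<otimes>\<^bsub>FF R\<^esub> y = \<one>\<^bsub>FF R\<^esub>"
    using ab frac_in_fcarr[of b a] by auto
qed

end



lemma (in domain) FF_is_fraction_field: "is_fraction_field R (FF R) (\<lambda>a. frac R a \<one>)"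
proof -
  interpret F: field "FF R" by (rule FF_field)
  have hom: "(\<lambda>a. frac R a \<one>) \<in> ring_hom R (FF R)"
  proof (rule ring_hom_memI)
    fix x assume "x \<in> carrier R" then show "frac R x \<one> \<in> carrier (FF R)" by (simp add: frac_in_fcarr)
  next
    fix x y assume "x \<in> carrier R" "y \<in> carrier R"
    then show "frac R (x \<otimes> y) \<one> = frac R x \<one> \<otimes>\<^bsub>FF R\<^esub> frac R y \<one>"
      by (simp add: fmult_frac)
  next
    fix x y assume "x \<in> carrier R" "y \<in> carrier R"
    then show "frac R (x \<oplus> y) \<one> = frac R x \<one> \<oplus>\<^bsub>FF R\<^esub> frac R y \<one>"
      by (simp add: fadd_frac)
  qed simp
  have inj: "inj_on (\<lambda>a. frac R a \<one>) (carrier R)"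
  proof (rule inj_onI)
    fix x y assume "x \<in> carrier R" "y \<in> carrier R" "frac R x \<one> = frac R y \<one>"
    then show "x = y" using frac_eq[of x \<one> y \<one>] by simp
  qed
  have fr: "\<exists>a\<in>carrier R. \<exists>b\<in>carrier R. b \<noteq> \<zero> \<and> k = frac R a \<one> \<otimes>\<^bsub>FF R\<^esub> inv\<^bsub>FF R\<^esub> (frac R b \<one>)"
    if kin: "k \<in> carrier (FF R)" for k
  proof -
    obtain a b where ab: "a \<in> carrier R" "b \<in> carrier R" "b \<noteq> \<zero>" "k = frac R a b"
    proof -
      from kin have "k \<in> fcarr R" by simp
      then show ?thesis using that by (rule fcarrE)
    qed
    have m1: "frac R b \<one> \<otimes>\<^bsub>FF R\<^esub> frac R \<one> b = \<one>\<^bsub>FF R\<^esub>"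
      using ab(1-3) fmult_frac[of b \<one> \<one> b] frac_eq[of b b \<one> \<one>] by simp
    have m2: "frac R \<one> b \<otimes>\<^bsub>FF R\<^esub> frac R b \<one> = \<one>\<^bsub>FF R\<^esub>"
      using ab(1-3) fmult_frac[of \<one> b b \<one>] frac_eq[of b b \<one> \<one>] by simp
    have c1: "frac R b \<one> \<in> carrier (FF R)" "frac R \<one> b \<in> carrier (FF R)"
      using ab(1-3) by (simp_all add: frac_in_fcarr)
    have i: "frac R \<one> b = inv\<^bsub>FF R\<^esub> (frac R b \<one>)"
      using F.inv_unique'[OF c1 m1 m2] .
    have "frac R a \<one> \<otimes>\<^bsub>FF R\<^esub> frac R \<one> b = frac R a b"
      using ab(1-3) fmult_frac[of a \<one> \<one> b] by simp
    then have "k = frac R a \<one> \<otimes>\<^bsub>FF R\<^esub> frac R \<one> b" using ab(4) by simp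
    then have "k = frac R a \<one> \<otimes>\<^bsub>FF R\<^esub> inv\<^bsub>FF R\<^esub> (frac R b \<one>)"
      unfolding i .
    then show ?thesis using ab by blast
  qed
  have "domain R" by (rule domain_axioms)
  then show ?thesis unfolding is_fraction_field_def
    using hom inj fr FF_field by blast
qed



definition monic_roots :: "('a, 'm) ring_scheme \<Rightarrow> bool" where
  "monic_roots A \<longleftrightarrow> (\<forall>q. set q \<subseteq> carrier A \<and> q \<noteq> [] \<and> hd q = \<one>\<^bsub>A\<^esub> \<and> length q \<ge> 2 \<longrightarrow>
      (\<exists>a\<in>carrier A. ring.eval A q a = \<zero>\<^bsub>A\<^esub>))"

lemma root_in_image:
  assumes A: "domain A" and B: "domain B" and h: "h \<in> ring_hom A B" and mr: "monic_roots A"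
  shows "set q \<subseteq> carrier A \<Longrightarrow> q \<noteq> [] \<Longrightarrow> hd q = \<one>\<^bsub>A\<^esub> \<Longrightarrow> x \<in> carrier B \<Longrightarrow>
         ring.eval B (map h q) x = \<zero>\<^bsub>B\<^esub> \<Longrightarrow> x \<in> h ` carrier A"
proof (induction "length q" arbitrary: q rule: less_induct)
  case less
  interpret A: domain A by (rule A)
  interpret B: domain B by (rule B)
  interpret H: ring_hom_ring A B h using ring_hom_ringI2[OF A.ring_axioms B.ring_axioms h] .
  show ?case
  proof (cases "length q \<ge> 2")
    case False
    have "length q = 1" using False less(3) by (cases q) (auto simp: Suc_le_eq)
    then obtain c where "q = [c]" by (metis One_nat_def length_0_conv length_Suc_conv)
    with less have "q = [\<one>\<^bsub>A\<^esub>]" by simp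
    then have "B.eval (map h q) x = \<one>\<^bsub>B\<^esub>" using less by simp
    then show ?thesis using less by simp
  next
    case True
    then obtain a where a: "a \<in> carrier A" "A.eval q a = \<zero>\<^bsub>A\<^esub>"
      using mr less unfolding monic_roots_def by blast
    have qpoly: "q \<in> carrier (poly_ring A)"
      using less unfolding sym[OF univ_poly_carrier] polynomial_def by auto
    have "A.is_root q a" using a less unfolding A.is_root_def by auto
    then have "[\<one>\<^bsub>A\<^esub>, \<ominus>\<^bsub>A\<^esub> a] pdivides\<^bsub>A\<^esub> q" using A.is_root_imp_pdivides[OF qpoly] by blast
    then obtain c where c: "c \<in> carrier (poly_ring A)" "q = A.poly_mult [\<one>\<^bsub>A\<^esub>, \<ominus>\<^bsub>A\<^esub> a] c"
      unfolding pdivides_def factor_def univ_poly_mult by blast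
    have cpoly: "polynomial\<^bsub>A\<^esub> (carrier A) c" using c(1) univ_poly_carrier by blast
    have lpoly: "polynomial\<^bsub>A\<^esub> (carrier A) [\<one>\<^bsub>A\<^esub>, \<ominus>\<^bsub>A\<^esub> a]"
      using a unfolding polynomial_def by auto
    have cset: "set c \<subseteq> carrier A" using cpoly unfolding polynomial_def by auto
    have cne: "c \<noteq> []" using c(2) less A.poly_mult_zero(2)[of "[\<one>\<^bsub>A\<^esub>, \<ominus>\<^bsub>A\<^esub> a]"] a by auto
    have "degree q = 1 + degree c"
      using A.poly_mult_degree_eq[OF A.carrier_is_subring lpoly cpoly] c(2) cne by simp
    then have len: "length c < length q" using cne less by (cases c) auto
    have "hd q = \<one>\<^bsub>A\<^esub> \<otimes>\<^bsub>A\<^esub> hd c"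
      using A.poly_mult_lead_coeff[OF A.carrier_is_subring lpoly cpoly] c(2) cne by simp
    then have hdc: "hd c = \<one>\<^bsub>A\<^esub>" using less cne cset by (cases c) auto
    have mapset: "set (map h s) \<subseteq> carrier B" if "set s \<subseteq> carrier A" for s
      using that H.hom_closed by auto
    have lset: "set [\<one>\<^bsub>A\<^esub>, \<ominus>\<^bsub>A\<^esub> a] \<subseteq> carrier A" using a by auto
    have "B.eval (map h q) x = B.eval (B.normalize (map h q)) x"
      using B.eval_normalize[OF mapset[OF less(2)] less(5)] by simp
    also have "\<dots> = B.eval (B.poly_mult (map h [\<one>\<^bsub>A\<^esub>, \<ominus>\<^bsub>A\<^esub> a]) (map h c)) x"
      using H.poly_mult_hom'[OF lset cset] c(2) by simp
    also have "\<dots> = B.eval (map h [\<one>\<^bsub>A\<^esub>, \<ominus>\<^bsub>A\<^esub> a]) x \<otimes>\<^bsub>B\<^esub> B.eval (map h c) x"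
      using B.eval_poly_mult[OF mapset[OF lset] mapset[OF cset] less(5)] .
    also have "B.eval (map h [\<one>\<^bsub>A\<^esub>, \<ominus>\<^bsub>A\<^esub> a]) x = x \<oplus>\<^bsub>B\<^esub> h (\<ominus>\<^bsub>A\<^esub> a)"
      using less(5) a by simp
    finally have "(x \<oplus>\<^bsub>B\<^esub> h (\<ominus>\<^bsub>A\<^esub> a)) \<otimes>\<^bsub>B\<^esub> B.eval (map h c) x = \<zero>\<^bsub>B\<^esub>"
      using less by simp
    moreover have "B.eval (map h c) x \<in> carrier B"
      using B.eval_in_carrier[OF mapset[OF cset] less(5)] .
    ultimately have "x \<oplus>\<^bsub>B\<^esub> h (\<ominus>\<^bsub>A\<^esub> a) = \<zero>\<^bsub>B\<^esub> \<or> B.eval (map h c) x = \<zero>\<^bsub>B\<^esub>"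
      using B.integral[of "x \<oplus>\<^bsub>B\<^esub> h (\<ominus>\<^bsub>A\<^esub> a)" "B.eval (map h c) x"] less(5) a
        H.hom_closed[of "\<ominus>\<^bsub>A\<^esub> a"] by blast
    then show ?thesis
    proof
      assume "x \<oplus>\<^bsub>B\<^esub> h (\<ominus>\<^bsub>A\<^esub> a) = \<zero>\<^bsub>B\<^esub>"
      then have "x = h a" using a less(5)
        by (metis A.a_inv_closed A.l_neg B.add.inv_closed B.minus_equality H.hom_add H.hom_zero H.hom_closed B.add.inv_unique B.a_comm)
      then show ?thesis using a by blast
    next
      assume "B.eval (map h c) x = \<zero>\<^bsub>B\<^esub>"
      then show ?thesis using less(1)[OF len cset cne hdc less(5)] by blast
    qed
  qed
qed

lemma aic_monic_roots:
  assumes "aic_domain A" shows "monic_roots A"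
proof -
  obtain K :: "('a \<times> 'a) set ring" and \<iota> where fr: "is_fraction_field A K \<iota>"
    and ic: "\<forall>k \<in> carrier K. integral_over K (\<iota> ` carrier A) k \<longrightarrow> k \<in> \<iota> ` carrier A"
    and ac: "algebraically_closed K"
    using assms unfolding aic_domain_def by blast
  have A: "domain A" and K: "field K" and h: "\<iota> \<in> ring_hom A K" and inj: "inj_on \<iota> (carrier A)"
    using fr unfolding is_fraction_field_def by auto
  interpret A: domain A by (rule A)
  interpret K: algebraically_closed K by (rule ac)
  interpret H: ring_hom_ring A K \<iota> using ring_hom_ringI2[OF A.ring_axioms K.ring_axioms h] .
  show ?thesis unfolding monic_roots_def
  proof (intro allI impI, elim conjE)
    fix q assume q: "set q \<subseteq> carrier A" "q \<noteq> []" "hd q = \<one>\<^bsub>A\<^esub>" "2 \<le> length q"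
    let ?p = "map \<iota> q"
    have hdp: "hd ?p = \<one>\<^bsub>K\<^esub>" using q by (cases q) auto
    have setp: "set ?p \<subseteq> \<iota> ` carrier A" using q by auto
    have setp': "set ?p \<subseteq> carrier K" using q H.hom_closed by auto
    have ppoly: "?p \<in> carrier (poly_ring K)"
      unfolding sym[OF univ_poly_carrier] polynomial_def using hdp setp' by auto
    have "K.splitted ?p" using K.roots_over_carrier[OF ppoly] .
    then have "size (K.roots ?p) = length q - 1" unfolding K.splitted_def by simp
    then have "K.roots ?p \<noteq> {#}" using q(4) by auto
    then obtain k where "k \<in># K.roots ?p" by blast
    then have "K.is_root ?p k" using K.roots_mem_iff_is_root[OF ppoly] by blast
    then have k: "k \<in> carrier K" "K.eval ?p k = \<zero>\<^bsub>K\<^esub>" unfolding K.is_root_def by auto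
    have "integral_over K (\<iota> ` carrier A) k"
      unfolding integral_over_def
      by (rule exI[of _ ?p]) (use hdp setp k q in \<open>auto simp: polynomial_def\<close>)
    then obtain a where a: "a \<in> carrier A" "k = \<iota> a" using ic k by blast
    have "\<iota> (A.eval q a) = K.eval ?p (\<iota> a)" using H.eval_hom'[OF a(1) q(1)] .
    also have "\<dots> = \<iota> \<zero>\<^bsub>A\<^esub>" using k a by simp
    finally have "A.eval q a = \<zero>\<^bsub>A\<^esub>"
      using inj A.eval_in_carrier[OF q(1) a(1)] unfolding inj_on_def by blast
    then show "\<exists>a\<in>carrier A. A.eval q a = \<zero>\<^bsub>A\<^esub>" using a by blast
  qed
qed

lemma (in ring) eval_smult:
  assumes "set p \<subseteq> carrier R" "m \<in> carrier R" "x \<in> carrier R"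
  shows "eval (map (\<lambda>y. m \<otimes> y) p) x = m \<otimes> eval p x"
  using assms(1)
proof (induct p)
  case Nil then show ?case using assms by simp
next
  case (Cons c p)
  then have "eval (map (\<lambda>y. m \<otimes> y) (c # p)) x = (m \<otimes> c) \<otimes> x [^] length p \<oplus> m \<otimes> eval p x"
    by simp
  also have "\<dots> = m \<otimes> (c \<otimes> x [^] length p \<oplus> eval p x)"
    using Cons assms eval_in_carrier[of p x] by (simp add: r_distr m_assoc)
  finally show ?case by simp
qed

lemma (in domain) pow_nonzero: "x \<in> carrier R \<Longrightarrow> x \<noteq> \<zero> \<Longrightarrow> x [^] (n::nat) \<noteq> \<zero>"
  by (induct n) (auto simp: integral_iff)

fun sc :: "('a, 'm) ring_scheme \<Rightarrow> 'a \<Rightarrow> nat \<Rightarrow> 'a list \<Rightarrow> 'a list" where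
  "sc R u k [] = []"
| "sc R u k (c # p) = (c \<otimes>\<^bsub>R\<^esub> u [^]\<^bsub>R\<^esub> k) # sc R u (Suc k) p"

lemma length_sc [simp]: "length (sc R u k p) = length p"
  by (induct p arbitrary: k) auto

lemma (in cring) set_sc: "set p \<subseteq> carrier R \<Longrightarrow> u \<in> carrier R \<Longrightarrow> set (sc R u k p) \<subseteq> carrier R"
  by (induct p arbitrary: k) auto

lemma (in cring) eval_sc:
  assumes "set p \<subseteq> carrier R" "u \<in> carrier R" "x \<in> carrier R"
  shows "u \<otimes> eval (sc R u k p) (u \<otimes> x) = u [^] (k + length p) \<otimes> eval p x"
  using assms(1)
proof (induct p arbitrary: k)
  case Nil then show ?case using assms by simp
next
  case (Cons c p)
  let ?m = "length p"
  have c: "c \<in> carrier R" and p: "set p \<subseteq> carrier R" using Cons by auto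
  have e: "eval p x \<in> carrier R" using eval_in_carrier[OF p assms(3)] .
  have e2: "eval (sc R u (Suc k) p) (u \<otimes> x) \<in> carrier R"
    using eval_in_carrier[OF set_sc[OF p assms(2)]] assms by simp
  have "u \<otimes> eval (sc R u k (c # p)) (u \<otimes> x)
      = u \<otimes> ((c \<otimes> u [^] k) \<otimes> (u \<otimes> x) [^] ?m \<oplus> eval (sc R u (Suc k) p) (u \<otimes> x))"
    by simp
  also have "\<dots> = u \<otimes> ((c \<otimes> u [^] k) \<otimes> (u [^] ?m \<otimes> x [^] ?m)) \<oplus> u \<otimes> eval (sc R u (Suc k) p) (u \<otimes> x)"
    using assms c e2 by (simp add: nat_pow_distrib r_distr)
  also have "u \<otimes> eval (sc R u (Suc k) p) (u \<otimes> x) = u [^] (Suc k + ?m) \<otimes> eval p x"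
    using Cons(1)[OF p] .
  also have "u \<otimes> ((c \<otimes> u [^] k) \<otimes> (u [^] ?m \<otimes> x [^] ?m)) = u [^] (Suc k + ?m) \<otimes> (c \<otimes> x [^] ?m)"
  proof -
    have "u \<otimes> ((c \<otimes> u [^] k) \<otimes> (u [^] ?m \<otimes> x [^] ?m)) = (u [^] k \<otimes> u [^] ?m \<otimes> u) \<otimes> (c \<otimes> x [^] ?m)"
      using assms c by (simp add: m_ac)
    also have "u [^] k \<otimes> u [^] ?m \<otimes> u = u [^] (Suc k + ?m)"
      using assms by (simp add: nat_pow_mult)
    finally show ?thesis .
  qed
  also have "u [^] (Suc k + ?m) \<otimes> (c \<otimes> x [^] ?m) \<oplus> u [^] (Suc k + ?m) \<otimes> eval p x
      = u [^] (k + length (c # p)) \<otimes> eval (c # p) x"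
    using assms c e by (simp add: r_distr)
  finally show ?case .
qed

locale fracsetup =
  fixes D :: "('a, 'm) ring_scheme" and K :: "('b, 'n) ring_scheme" and \<iota> :: "'a \<Rightarrow> 'b"
  assumes fr: "is_fraction_field D K \<iota>"
begin

lemma facts: "domain D" "field K" "\<iota> \<in> ring_hom D K" "inj_on \<iota> (carrier D)"
    "\<forall>k \<in> carrier K. \<exists>a \<in> carrier D. \<exists>b \<in> carrier D. b \<noteq> \<zero>\<^bsub>D\<^esub> \<and>
        k = \<iota> a \<otimes>\<^bsub>K\<^esub> inv\<^bsub>K\<^esub> (\<iota> b)"
  using fr unfolding is_fraction_field_def by auto

sublocale D: domain D by (rule facts)
sublocale K: field K by (rule facts)
sublocale H: ring_hom_ring D K \<iota> using ring_hom_ringI2[OF D.ring_axioms K.ring_axioms facts(3)] .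

lemma nz: "b \<in> carrier D \<Longrightarrow> b \<noteq> \<zero>\<^bsub>D\<^esub> \<Longrightarrow> \<iota> b \<noteq> \<zero>\<^bsub>K\<^esub>"
  using facts(4) unfolding inj_on_def by (metis D.zero_closed H.hom_zero)

lemma unit: "x \<in> carrier K \<Longrightarrow> x \<noteq> \<zero>\<^bsub>K\<^esub> \<Longrightarrow> x \<in> Units K"
  using K.field_Units by auto

lemma cden: "\<exists>t\<in>carrier D. t \<noteq> \<zero>\<^bsub>D\<^esub> \<and> (\<forall>y\<in>set p. \<iota> t \<otimes>\<^bsub>K\<^esub> y \<in> \<iota> ` carrier D)"
  if "set p \<subseteq> carrier K" for p
    using that
  proof (induct p)
    case Nil then show ?case by (intro bexI[of _ "\<one>\<^bsub>D\<^esub>"]) auto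
  next
    case (Cons y p)
    have yK: "y \<in> carrier K" and pK: "set p \<subseteq> carrier K" using Cons.prems by auto
    obtain t where t: "t \<in> carrier D" "t \<noteq> \<zero>\<^bsub>D\<^esub>" "\<forall>y\<in>set p. \<iota> t \<otimes>\<^bsub>K\<^esub> y \<in> \<iota> ` carrier D"
      using Cons.hyps[OF pK] by blast
    obtain a b where ab: "a \<in> carrier D" "b \<in> carrier D" "b \<noteq> \<zero>\<^bsub>D\<^esub>" "y = \<iota> a \<otimes>\<^bsub>K\<^esub> inv\<^bsub>K\<^esub> (\<iota> b)"
      using bspec[OF facts(5) yK] by (elim bexE conjE) (rule that, assumption+)
    have ub: "\<iota> b \<in> Units K" using unit[OF H.hom_closed[OF ab(2)] nz[OF ab(2,3)]] .
    have "\<iota> (t \<otimes>\<^bsub>D\<^esub> b) \<otimes>\<^bsub>K\<^esub> y = \<iota> (t \<otimes>\<^bsub>D\<^esub> a)"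
    proof -
      obtain v where vdef: "v = inv\<^bsub>K\<^esub> (\<iota> b)" by blast
      have v: "v \<in> carrier K" "\<iota> b \<otimes>\<^bsub>K\<^esub> v = \<one>\<^bsub>K\<^esub>" "y = \<iota> a \<otimes>\<^bsub>K\<^esub> v"
        using vdef ab(4) K.Units_r_inv[OF ub] K.Units_inv_closed[OF ub] by simp_all
      have "\<iota> (t \<otimes>\<^bsub>D\<^esub> b) \<otimes>\<^bsub>K\<^esub> y = \<iota> t \<otimes>\<^bsub>K\<^esub> \<iota> a \<otimes>\<^bsub>K\<^esub> (\<iota> b \<otimes>\<^bsub>K\<^esub> v)"
        using ab(1-3) t(1) v(1,3) by (simp add: K.m_ac)
      also have "\<dots> = \<iota> t \<otimes>\<^bsub>K\<^esub> \<iota> a \<otimes>\<^bsub>K\<^esub> \<one>\<^bsub>K\<^esub>" by (simp only: v(2))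
      also have "\<dots> = \<iota> (t \<otimes>\<^bsub>D\<^esub> a)" using ab t by simp
      finally show ?thesis .
    qed
    moreover have "\<iota> (t \<otimes>\<^bsub>D\<^esub> b) \<otimes>\<^bsub>K\<^esub> z \<in> \<iota> ` carrier D" if "z \<in> set p" for z
    proof -
      have zK: "z \<in> carrier K" using that pK by auto
      have "\<iota> t \<otimes>\<^bsub>K\<^esub> z \<in> \<iota> ` carrier D" using t(3) that by blast
      then obtain s where s: "s \<in> carrier D" "\<iota> t \<otimes>\<^bsub>K\<^esub> z = \<iota> s"
        by (elim imageE) (rule that, assumption+)
      have "\<iota> (t \<otimes>\<^bsub>D\<^esub> b) \<otimes>\<^bsub>K\<^esub> z = \<iota> b \<otimes>\<^bsub>K\<^esub> (\<iota> t \<otimes>\<^bsub>K\<^esub> z)"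
        using ab(2) t(1) zK by (simp add: K.m_ac)
      also have "\<dots> = \<iota> b \<otimes>\<^bsub>K\<^esub> \<iota> s" by (simp only: s(2))
      also have "\<dots> = \<iota> (b \<otimes>\<^bsub>D\<^esub> s)" using ab(2) s(1) by simp
      finally show ?thesis using s(1) ab(2) by blast
    qed
    moreover have "\<iota> (t \<otimes>\<^bsub>D\<^esub> a) \<in> \<iota> ` carrier D" using t(1) ab(1) by blast
    moreover have "t \<otimes>\<^bsub>D\<^esub> b \<in> carrier D" "t \<otimes>\<^bsub>D\<^esub> b \<noteq> \<zero>\<^bsub>D\<^esub>"
      using t(1,2) ab(2,3) D.integral_iff by auto
    ultimately show ?case by (intro bexI[of _ "t \<otimes>\<^bsub>D\<^esub> b"] conjI ballI) auto
  qed

lemma scin: "set (sc K (\<iota> t) k p) \<subseteq> \<iota> ` carrier D"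
  if "t \<in> carrier D" "k \<ge> 1" "set p \<subseteq> carrier K" "\<forall>y\<in>set p. \<iota> t \<otimes>\<^bsub>K\<^esub> y \<in> \<iota> ` carrier D" for t k p
    using that
  proof (induct p arbitrary: k)
    case Nil then show ?case by simp
  next
    case (Cons y p)
    have "\<iota> t \<otimes>\<^bsub>K\<^esub> y \<in> \<iota> ` carrier D" using Cons.prems by simp
    then obtain s where s: "s \<in> carrier D" "\<iota> t \<otimes>\<^bsub>K\<^esub> y = \<iota> s"
      by (elim imageE) (rule that, assumption+)
    obtain k' where k': "k = Suc k'" using Cons(3) by (cases k) auto
    have "y \<otimes>\<^bsub>K\<^esub> \<iota> t [^]\<^bsub>K\<^esub> k = (\<iota> t \<otimes>\<^bsub>K\<^esub> y) \<otimes>\<^bsub>K\<^esub> \<iota> t [^]\<^bsub>K\<^esub> k'"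
      using Cons k' by (simp add: K.m_ac)
    also have "\<dots> = \<iota> (s \<otimes>\<^bsub>D\<^esub> t [^]\<^bsub>D\<^esub> k')" using s Cons by (simp add: H.hom_nat_pow)
    finally have "y \<otimes>\<^bsub>K\<^esub> \<iota> t [^]\<^bsub>K\<^esub> k \<in> \<iota> ` carrier D" using s Cons by blast
    moreover have "set (sc K (\<iota> t) (Suc k) p) \<subseteq> \<iota> ` carrier D" using Cons by auto
    ultimately show ?case by simp
  qed

lemma alg_closed:
  assumes mr: "monic_roots D"
  shows "algebraically_closed K"
proof -
  show ?thesis
  proof (rule K.algebraically_closedI)
    fix p assume p: "p \<in> carrier (poly_ring K)" "degree p > 1"
    have ppoly: "polynomial\<^bsub>K\<^esub> (carrier K) p" using p(1) univ_poly_carrier by blast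
    have pne: "p \<noteq> []" using p(2) by auto
    then have pset: "set p \<subseteq> carrier K" and c: "hd p \<in> carrier K" "hd p \<noteq> \<zero>\<^bsub>K\<^esub>"
      using ppoly unfolding polynomial_def by auto
    let ?c = "hd p"
    have uc: "?c \<in> Units K" using unit c by blast
    let ?p1 = "map (\<lambda>y. inv\<^bsub>K\<^esub> ?c \<otimes>\<^bsub>K\<^esub> y) p"
    have p1set: "set ?p1 \<subseteq> carrier K" using pset uc by auto
    obtain r where p1: "?p1 = \<one>\<^bsub>K\<^esub> # r" using pne uc by (cases p) auto
    have rset: "set r \<subseteq> carrier K" using p1set p1 by auto
    obtain t where t: "t \<in> carrier D" "t \<noteq> \<zero>\<^bsub>D\<^esub>" "\<forall>y\<in>set ?p1. \<iota> t \<otimes>\<^bsub>K\<^esub> y \<in> \<iota> ` carrier D"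
      using cden[OF p1set] by blast
    let ?u = "\<iota> t"
    have u: "?u \<in> carrier K" "?u \<noteq> \<zero>\<^bsub>K\<^esub>" using t nz by auto
    have scr: "set (sc K ?u 1 r) \<subseteq> \<iota> ` carrier D" using scin[OF t(1) _ rset] t(3) p1 by auto
    have s: "sc K ?u 0 ?p1 = \<one>\<^bsub>K\<^esub> # sc K ?u 1 r" using p1 by simp
    let ?q = "\<one>\<^bsub>D\<^esub> # map (inv_into (carrier D) \<iota>) (sc K ?u 1 r)"
    have mq: "map \<iota> ?q = sc K ?u 0 ?p1"
      using s scr by (simp add: map_idI f_inv_into_f subsetD)
    have qset: "set ?q \<subseteq> carrier D" using scr by (auto intro: inv_into_into)
    have "length ?q = length p" using p1 by (metis length_Cons length_map length_sc)
    then have "length ?q \<ge> 2" using p(2) by auto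
    then have "\<exists>r0\<in>carrier D. D.eval ?q r0 = \<zero>\<^bsub>D\<^esub>"
      using spec[OF mr[unfolded monic_roots_def], of ?q] qset by simp
    then obtain r0 where r0: "r0 \<in> carrier D" "D.eval ?q r0 = \<zero>\<^bsub>D\<^esub>"
      by (elim bexE) (rule that, assumption+)
    have "K.eval (sc K ?u 0 ?p1) (\<iota> r0) = K.eval (map \<iota> ?q) (\<iota> r0)" by (simp only: mq)
    also have "\<dots> = \<iota> (D.eval ?q r0)" by (rule H.eval_hom'[OF r0(1) qset, symmetric])
    also have "\<dots> = \<zero>\<^bsub>K\<^esub>" using r0(2) by simp
    finally have "K.eval (sc K ?u 0 ?p1) (\<iota> r0) = \<zero>\<^bsub>K\<^esub>" .
    define x where "x = inv\<^bsub>K\<^esub> ?u \<otimes>\<^bsub>K\<^esub> \<iota> r0"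
    have uu: "?u \<in> Units K" using unit u by blast
    have x: "x \<in> carrier K" using uu r0 unfolding x_def by simp
    have ux: "?u \<otimes>\<^bsub>K\<^esub> x = \<iota> r0"
    proof -
      have "?u \<otimes>\<^bsub>K\<^esub> x = (?u \<otimes>\<^bsub>K\<^esub> inv\<^bsub>K\<^esub> ?u) \<otimes>\<^bsub>K\<^esub> \<iota> r0"
        unfolding x_def
        by (rule K.m_assoc[symmetric]) (use uu r0(1) K.Units_closed K.Units_inv_closed H.hom_closed in auto)
      then show ?thesis using uu r0(1) by simp
    qed
    have "?u [^]\<^bsub>K\<^esub> (0 + length ?p1) \<otimes>\<^bsub>K\<^esub> K.eval ?p1 x = \<zero>\<^bsub>K\<^esub>"
      using K.eval_sc[OF p1set u(1) x, of 0] ux \<open>K.eval (sc K ?u 0 ?p1) (\<iota> r0) = \<zero>\<^bsub>K\<^esub>\<close> u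
      by simp
    then have "K.eval ?p1 x = \<zero>\<^bsub>K\<^esub>"
      using K.pow_nonzero[OF u] K.integral_iff u K.eval_in_carrier[OF p1set x] by auto
    then have "inv\<^bsub>K\<^esub> ?c \<otimes>\<^bsub>K\<^esub> K.eval p x = \<zero>\<^bsub>K\<^esub>"
      using K.eval_smult[OF pset _ x, of "inv\<^bsub>K\<^esub> ?c"] uc by simp
    moreover have icc: "inv\<^bsub>K\<^esub> ?c \<in> carrier K" using uc by simp
    moreover have "inv\<^bsub>K\<^esub> ?c \<otimes>\<^bsub>K\<^esub> ?c = \<one>\<^bsub>K\<^esub>" using uc by simp
    then have "inv\<^bsub>K\<^esub> ?c \<noteq> \<zero>\<^bsub>K\<^esub>" using c(1) by auto
    ultimately have "K.eval p x = \<zero>\<^bsub>K\<^esub>"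
      using K.integral[OF _ icc K.eval_in_carrier[OF pset x]] by blast
    then show "\<exists>x\<in>carrier K. K.eval p x = \<zero>\<^bsub>K\<^esub>" using x by blast
  qed
qed

end

lemma frac_field_alg_closed:
  assumes "is_fraction_field D K \<iota>" "monic_roots D"
  shows "algebraically_closed K"
  using fracsetup.alg_closed[OF fracsetup.intro[OF assms(1)] assms(2)] .




lemma RDirProd_simps [simp]:
  "carrier (RDirProd R S) = carrier R \<times> carrier S"
  "(x, y) \<otimes>\<^bsub>RDirProd R S\<^esub> (x', y') = (x \<otimes>\<^bsub>R\<^esub> x', y \<otimes>\<^bsub>S\<^esub> y')"
  "(x, y) \<oplus>\<^bsub>RDirProd R S\<^esub> (x', y') = (x \<oplus>\<^bsub>R\<^esub> x', y \<oplus>\<^bsub>S\<^esub> y')"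
  "\<one>\<^bsub>RDirProd R S\<^esub> = (\<one>\<^bsub>R\<^esub>, \<one>\<^bsub>S\<^esub>)"
  "\<zero>\<^bsub>RDirProd R S\<^esub> = (\<zero>\<^bsub>R\<^esub>, \<zero>\<^bsub>S\<^esub>)"
  by (simp_all add: RDirProd_def DirProd_def monoid.defs)

lemma domain_idem: assumes "domain D" "x \<in> carrier D" "x \<otimes>\<^bsub>D\<^esub> x = x"
  shows "x = \<zero>\<^bsub>D\<^esub> \<or> x = \<one>\<^bsub>D\<^esub>"
proof -
  interpret domain D by fact
  have "x \<otimes>\<^bsub>D\<^esub> x = x \<otimes>\<^bsub>D\<^esub> \<one>\<^bsub>D\<^esub>" using assms by simp
  then show ?thesis using m_lcancel[of x x "\<one>\<^bsub>D\<^esub>"] assms(2) by auto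
qed

lemma reduce:
  assumes "\<forall>A\<in>set As. ring A" "\<psi> \<in> ring_hom (RDirProd_list As) D" "domain D"
  shows "\<exists>A\<in>set As. \<exists>\<theta>\<in>ring_hom A D. \<theta> ` carrier A = \<psi> ` carrier (RDirProd_list As)"
  using assms
proof (induct As arbitrary: \<psi>)
  case Nil
  interpret D: domain D by fact
  have "\<psi> [] = \<one>\<^bsub>D\<^esub>" using ring_hom_one[OF Nil(2)] by (simp add: monoid.defs)
  moreover have "\<psi> ([] \<oplus>\<^bsub>RDirProd_list []\<^esub> []) = \<psi> [] \<oplus>\<^bsub>D\<^esub> \<psi> []"
    using ring_hom_add[OF Nil(2)] by (simp add: monoid.defs)
  ultimately have "\<one>\<^bsub>D\<^esub> = \<one>\<^bsub>D\<^esub> \<oplus>\<^bsub>D\<^esub> \<one>\<^bsub>D\<^esub>" by (simp add: monoid.defs)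
  then have "\<one>\<^bsub>D\<^esub> = \<zero>\<^bsub>D\<^esub>" by (metis D.l_zero D.one_closed D.r_zero D.zero_closed D.add.right_cancel)
  then show ?case using D.one_not_zero by simp
next
  case (Cons A As)
  interpret D: domain D by fact
  let ?P = "RDirProd_list As"
  let ?Q = "RDirProd A ?P"
  have rA: "ring A" using Cons by simp
  have rP: "ring ?P" using Cons(2) by (intro RDirProd_list_is_ring) auto
  interpret A: ring A by (rule rA)
  interpret P: ring ?P by (rule rP)
  define \<psi>' where "\<psi>' = \<psi> \<circ> (\<lambda>(a, as). a # as)"
  have h': "\<psi>' \<in> ring_hom ?Q D" unfolding \<psi>'_def
    by (rule ring_hom_trans[OF RDirProd_list_hom1 Cons(3)])
  have carrQ: "(\<lambda>(a, as). a # as) ` carrier ?Q = carrier (RDirProd_list (A # As))"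
    using RDirProd_list_carrier[of A As] by simp
  have img: "\<psi>' ` carrier ?Q = \<psi> ` carrier (RDirProd_list (A # As))"
    unfolding \<psi>'_def image_comp[symmetric] carrQ ..
  let ?e = "(\<one>\<^bsub>A\<^esub>, \<zero>\<^bsub>?P\<^esub>)" and ?f = "(\<zero>\<^bsub>A\<^esub>, \<one>\<^bsub>?P\<^esub>)"
  have eQ: "?e \<in> carrier ?Q" and fQ: "?f \<in> carrier ?Q" by auto
  have "\<psi>' ?e \<otimes>\<^bsub>D\<^esub> \<psi>' ?e = \<psi>' ?e"
    using ring_hom_mult[OF h' eQ eQ] by simp
  then have ecases: "\<psi>' ?e = \<zero>\<^bsub>D\<^esub> \<or> \<psi>' ?e = \<one>\<^bsub>D\<^esub>"
    using domain_idem[OF Cons(4) ring_hom_closed[OF h' eQ]] by simp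
  have ef: "\<psi>' ?e \<oplus>\<^bsub>D\<^esub> \<psi>' ?f = \<one>\<^bsub>D\<^esub>"
    using ring_hom_add[OF h' eQ fQ] ring_hom_one[OF h'] by simp
  show ?case
  proof (cases "\<psi>' ?e = \<one>\<^bsub>D\<^esub>")
    case True
    define \<theta> where "\<theta> = (\<lambda>a. \<psi>' (a, \<zero>\<^bsub>?P\<^esub>))"
    have th: "\<theta> \<in> ring_hom A D"
    proof (rule ring_hom_memI)
      fix x assume "x \<in> carrier A" then show "\<theta> x \<in> carrier D"
        unfolding \<theta>_def using ring_hom_closed[OF h'] by simp
    next
      fix x y assume xy: "x \<in> carrier A" "y \<in> carrier A"
      then show "\<theta> (x \<otimes>\<^bsub>A\<^esub> y) = \<theta> x \<otimes>\<^bsub>D\<^esub> \<theta> y"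
        unfolding \<theta>_def using ring_hom_mult[OF h', of "(x, \<zero>\<^bsub>?P\<^esub>)" "(y, \<zero>\<^bsub>?P\<^esub>)"] by simp
    next
      fix x y assume xy: "x \<in> carrier A" "y \<in> carrier A"
      then show "\<theta> (x \<oplus>\<^bsub>A\<^esub> y) = \<theta> x \<oplus>\<^bsub>D\<^esub> \<theta> y"
        unfolding \<theta>_def using ring_hom_add[OF h', of "(x, \<zero>\<^bsub>?P\<^esub>)" "(y, \<zero>\<^bsub>?P\<^esub>)"] by simp
    next
      show "\<theta> \<one>\<^bsub>A\<^esub> = \<one>\<^bsub>D\<^esub>" unfolding \<theta>_def using True by simp
    qed
    have "\<theta> ` carrier A = \<psi>' ` carrier ?Q"
    proof
      show "\<theta> ` carrier A \<subseteq> \<psi>' ` carrier ?Q" unfolding \<theta>_def by auto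
    next
      show "\<psi>' ` carrier ?Q \<subseteq> \<theta> ` carrier A"
      proof
        fix z assume "z \<in> \<psi>' ` carrier ?Q"
        then obtain a s where as: "a \<in> carrier A" "s \<in> carrier ?P" "z = \<psi>' (a, s)" by auto
        have "\<psi>' (a, s) = \<psi>' (a, s) \<otimes>\<^bsub>D\<^esub> \<psi>' ?e"
          using True ring_hom_closed[OF h', of "(a, s)"] as by simp
        also have "\<dots> = \<psi>' ((a, s) \<otimes>\<^bsub>?Q\<^esub> ?e)"
          using ring_hom_mult[OF h', of "(a, s)" ?e] as by simp
        also have "\<dots> = \<theta> a" unfolding \<theta>_def using as by simp
        finally show "z \<in> \<theta> ` carrier A" using as by auto
      qed
    qed
    then show ?thesis using th img by auto
  next
    case False
    then have eo: "\<psi>' ?e = \<zero>\<^bsub>D\<^esub>" using ecases by simp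
    then have fo: "\<psi>' ?f = \<one>\<^bsub>D\<^esub>" using ef ring_hom_closed[OF h' fQ] by simp
    define \<theta> where "\<theta> = (\<lambda>s. \<psi>' (\<zero>\<^bsub>A\<^esub>, s))"
    have th: "\<theta> \<in> ring_hom ?P D"
    proof (rule ring_hom_memI)
      fix x assume "x \<in> carrier ?P" then show "\<theta> x \<in> carrier D"
        unfolding \<theta>_def using ring_hom_closed[OF h'] by simp
    next
      fix x y assume xy: "x \<in> carrier ?P" "y \<in> carrier ?P"
      then show "\<theta> (x \<otimes>\<^bsub>?P\<^esub> y) = \<theta> x \<otimes>\<^bsub>D\<^esub> \<theta> y"
        unfolding \<theta>_def using ring_hom_mult[OF h', of "(\<zero>\<^bsub>A\<^esub>, x)" "(\<zero>\<^bsub>A\<^esub>, y)"] by simp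
    next
      fix x y assume xy: "x \<in> carrier ?P" "y \<in> carrier ?P"
      then show "\<theta> (x \<oplus>\<^bsub>?P\<^esub> y) = \<theta> x \<oplus>\<^bsub>D\<^esub> \<theta> y"
        unfolding \<theta>_def using ring_hom_add[OF h', of "(\<zero>\<^bsub>A\<^esub>, x)" "(\<zero>\<^bsub>A\<^esub>, y)"] by simp
    next
      show "\<theta> \<one>\<^bsub>?P\<^esub> = \<one>\<^bsub>D\<^esub>" unfolding \<theta>_def using fo by simp
    qed
    have "\<theta> ` carrier ?P = \<psi>' ` carrier ?Q"
    proof
      show "\<theta> ` carrier ?P \<subseteq> \<psi>' ` carrier ?Q" unfolding \<theta>_def by auto
    next
      show "\<psi>' ` carrier ?Q \<subseteq> \<theta> ` carrier ?P"
      proof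
        fix z assume "z \<in> \<psi>' ` carrier ?Q"
        then obtain a s where as: "a \<in> carrier A" "s \<in> carrier ?P" "z = \<psi>' (a, s)" by auto
        have "\<psi>' (a, s) = \<psi>' (a, s) \<otimes>\<^bsub>D\<^esub> \<psi>' ?f"
          using fo ring_hom_closed[OF h', of "(a, s)"] as by simp
        also have "\<dots> = \<psi>' ((a, s) \<otimes>\<^bsub>?Q\<^esub> ?f)"
          using ring_hom_mult[OF h', of "(a, s)" ?f] as by simp
        also have "\<dots> = \<theta> s" unfolding \<theta>_def using as by simp
        finally show "z \<in> \<theta> ` carrier ?P" using as by auto
      qed
    qed
    moreover obtain A' \<theta>' where "A' \<in> set As" "\<theta>' \<in> ring_hom A' D" "\<theta>' ` carrier A' = \<theta> ` carrier ?P"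
      using Cons(1)[OF _ th Cons(4)] Cons(2) by auto
    ultimately show ?thesis using img by auto
  qed
qed




lemma lift_monic:
  assumes rA: "ring A" and h: "h \<in> ring_hom A B" and p: "p \<noteq> []" "hd p = \<one>\<^bsub>B\<^esub>" "set (tl p) \<subseteq> h ` carrier A"
  shows "\<exists>q. set q \<subseteq> carrier A \<and> q \<noteq> [] \<and> hd q = \<one>\<^bsub>A\<^esub> \<and> map h q = p \<and> length q = length p"
proof -
  let ?q = "\<one>\<^bsub>A\<^esub> # map (inv_into (carrier A) h) (tl p)"
  have "\<one>\<^bsub>A\<^esub> \<in> carrier A" using rA by (simp add: ring.ring_simprules)
  then have "set ?q \<subseteq> carrier A" using p(3) by (auto intro: inv_into_into)
  moreover have "map h ?q = p"
  proof -
    have "map h ?q = h \<one>\<^bsub>A\<^esub> # map (h \<circ> inv_into (carrier A) h) (tl p)" by simp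
    also have "map (h \<circ> inv_into (carrier A) h) (tl p) = tl p"
      using p(3) by (intro map_idI) (auto simp: f_inv_into_f)
    also have "h \<one>\<^bsub>A\<^esub> = \<one>\<^bsub>B\<^esub>" using ring_hom_one[OF h] .
    finally show ?thesis using p(1,2) by (cases p) auto
  qed
  moreover have "length ?q = length p" using p(1) by (cases p) auto
  ultimately show ?thesis by (intro exI[of _ ?q]) auto
qed

lemma main_lemma:
  assumes aA: "aic_domain A" and D: "domain D" and th: "\<theta> \<in> ring_hom A D"
    and int: "\<forall>d\<in>carrier D. integral_over D (\<theta> ` carrier A) d"
  shows "\<theta> ` carrier A = carrier D \<and> aic_domain D"
proof -
  have A: "domain A" using aA unfolding aic_domain_def by blast
  have mrA: "monic_roots A" using aic_monic_roots[OF aA] .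
  interpret A: domain A by (rule A)
  interpret D: domain D by (rule D)
  interpret H: ring_hom_ring A D \<theta> using ring_hom_ringI2[OF A.ring_axioms D.ring_axioms th] .
  have surj: "\<theta> ` carrier A = carrier D"
  proof
    show "\<theta> ` carrier A \<subseteq> carrier D" using H.hom_closed by auto
  next
    show "carrier D \<subseteq> \<theta> ` carrier A"
    proof
      fix d assume d: "d \<in> carrier D"
      then obtain p where p: "polynomial\<^bsub>D\<^esub> (\<theta> ` carrier A) p" "p \<noteq> []" "hd p = \<one>\<^bsub>D\<^esub>"
        "D.eval p d = \<zero>\<^bsub>D\<^esub>"
        using int unfolding integral_over_def by blast
      have "set p \<subseteq> \<theta> ` carrier A" using p(1,2) unfolding polynomial_def by auto
      then have "set (tl p) \<subseteq> \<theta> ` carrier A" by (cases p) auto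
      then obtain q where q: "set q \<subseteq> carrier A" "q \<noteq> []" "hd q = \<one>\<^bsub>A\<^esub>" "map \<theta> q = p"
        using lift_monic[OF A.ring_axioms th p(2,3)] by blast
      show "d \<in> \<theta> ` carrier A"
        using root_in_image[OF A D th mrA q(1-3) d] q(4) p(4) by simp
    qed
  qed
  have mrD: "monic_roots D" unfolding monic_roots_def
  proof (intro allI impI, elim conjE)
    fix p assume p: "set p \<subseteq> carrier D" "p \<noteq> []" "hd p = \<one>\<^bsub>D\<^esub>" "2 \<le> length p"
    have "set (tl p) \<subseteq> \<theta> ` carrier A" using p(1,2) surj by (cases p) auto
    then obtain q where q: "set q \<subseteq> carrier A" "q \<noteq> []" "hd q = \<one>\<^bsub>A\<^esub>" "map \<theta> q = p"
      "length q = length p"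
      using lift_monic[OF A.ring_axioms th p(2,3)] by blast
    have "\<exists>a\<in>carrier A. A.eval q a = \<zero>\<^bsub>A\<^esub>"
      using spec[OF mrA[unfolded monic_roots_def], of q] q p(4) by simp
    then obtain a where a: "a \<in> carrier A" "A.eval q a = \<zero>\<^bsub>A\<^esub>"
      by (elim bexE) (rule that, assumption+)
    have "D.eval p (\<theta> a) = \<theta> (A.eval q a)" using H.eval_hom'[OF a(1) q(1)] q(4) by simp
    also have "\<dots> = \<zero>\<^bsub>D\<^esub>" using a(2) by simp
    finally show "\<exists>x\<in>carrier D. D.eval p x = \<zero>\<^bsub>D\<^esub>" using a(1) H.hom_closed by blast
  qed
  let ?K = "FF D" and ?\<iota> = "\<lambda>a. frac D a \<one>\<^bsub>D\<^esub>"
  have fr: "is_fraction_field D ?K ?\<iota>" by (rule D.FF_is_fraction_field)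
  have Kf: "field ?K" and ih: "?\<iota> \<in> ring_hom D ?K" using fr unfolding is_fraction_field_def by auto
  have Kd: "domain ?K" using Kf field.axioms(1) by blast
  have ic: "\<forall>k\<in>carrier ?K. integral_over ?K (?\<iota> ` carrier D) k \<longrightarrow> k \<in> ?\<iota> ` carrier D"
  proof (intro ballI impI)
    fix k assume k: "k \<in> carrier ?K" "integral_over ?K (?\<iota> ` carrier D) k"
    then obtain p where p: "polynomial\<^bsub>?K\<^esub> (?\<iota> ` carrier D) p" "p \<noteq> []" "hd p = \<one>\<^bsub>?K\<^esub>"
        "ring.eval ?K p k = \<zero>\<^bsub>?K\<^esub>"
      unfolding integral_over_def by blast
    have "set p \<subseteq> ?\<iota> ` carrier D" using p(1,2) unfolding polynomial_def by auto
    then have "set (tl p) \<subseteq> ?\<iota> ` carrier D" by (cases p) auto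
    then obtain q where q: "set q \<subseteq> carrier D" "q \<noteq> []" "hd q = \<one>\<^bsub>D\<^esub>" "map ?\<iota> q = p"
      using lift_monic[OF D.ring_axioms ih p(2,3)] by blast
    show "k \<in> ?\<iota> ` carrier D"
      using root_in_image[OF D Kd ih mrD q(1-3) k(1)] q(4) p(4) by simp
  qed
  have ac: "algebraically_closed ?K" using frac_field_alg_closed[OF fr mrD] .
  have "aic_domain D" unfolding aic_domain_def
    using D fr ic ac by blast
  then show ?thesis using surj by blast
qed

theorem mainTheorem19:
  fixes R :: "'a ring" and D :: "'b ring" and \<phi> :: "'a \<Rightarrow> 'b"
  assumes "cring R" and "aic_ring R"
    and "domain D"
    and "\<phi> \<in> ring_hom R D"
    and "integral_hom R D \<phi>"
  shows "\<phi> ` carrier R = carrier D \<and> aic_domain D"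
proof -
  obtain As :: "('a set) ring list" where As: "\<forall>A \<in> set As. aic_domain A" and iso: "R \<simeq> RDirProd_list As"
    using assms(2) unfolding aic_ring_def by blast
  obtain f where f: "f \<in> ring_iso R (RDirProd_list As)" using iso unfolding is_ring_iso_def by blast
  have rR: "ring R" using assms(1) cring.axioms(1) by blast
  have rAs: "\<forall>A\<in>set As. ring A"
    using As unfolding aic_domain_def by (auto intro: domain.axioms(1) cring.axioms(1))
  let ?g = "inv_into (carrier R) f"
  have g: "?g \<in> ring_iso (RDirProd_list As) R" using ring_iso_set_sym[OF rR f] .
  have ghom: "?g \<in> ring_hom (RDirProd_list As) R" using g unfolding ring_iso_def by blast
  have gimg: "?g ` carrier (RDirProd_list As) = carrier R"
    using g unfolding ring_iso_def bij_betw_def by blast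
  define \<psi> where "\<psi> = \<phi> \<circ> ?g"
  have psi: "\<psi> \<in> ring_hom (RDirProd_list As) D"
    unfolding \<psi>_def by (rule ring_hom_trans[OF ghom assms(4)])
  have pimg: "\<psi> ` carrier (RDirProd_list As) = \<phi> ` carrier R"
    unfolding \<psi>_def image_comp[symmetric] gimg ..
  obtain A \<theta> where A: "A \<in> set As" and th: "\<theta> \<in> ring_hom A D"
    and timg: "\<theta> ` carrier A = \<psi> ` carrier (RDirProd_list As)"
    using reduce[OF rAs psi assms(3)] by blast
  have int: "\<forall>d\<in>carrier D. integral_over D (\<theta> ` carrier A) d"
    using assms(5) unfolding integral_hom_def timg pimg .
  show ?thesis using main_lemma[OF bspec[OF As A] assms(3) th int] timg pimg by simp
qed


end
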